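(* Let $E$ be a topological space, let $\Omega\subseteq E$ be a non-empty relatively compact open set with $\partial\Omega\neq\emptyset$, and let $Y$ be a real locally convex Hausdorff topological vector space. Let $g:\overline{\Omega}\to Y$ be continuous and let $f=g|_{\Omega}$. Then the following are equivalent: (c1) $f$ satisfies the convex hull-like property in $\Omega$; (c2) $g$ satisfies the convex hull property in $\overline{\Omega}$, i.e. $g(\Omega)\subseteq\overline{\mathrm{conv}}(g(\partial\Omega))$.
   Context: $\overline{\Omega}$ and $\partial\Omega$ are the closure and boundary of $\Omega$ in $E$; $\overline{\mathrm{conv}}(S)$ is the closed convex hull of $S$. A function $\psi:Y\to\mathbf{R}$ is quasi-convex if for each $r\in\mathbf{R}$ the set $\psi^{-1}(]-\infty,r])$ is convex. A continuous function $f:\Omega\to Y$ satisfies the convex hull-like property in $\Omega$ if for every continuous quasi-convex $\psi:Y\to\mathbf{R}$ there exists $x^*\in\partial\Omega$ such that $\limsup_{x\to x^*,\,x\in\Omega}\psi(f(x))=\sup_{x\in\Omega}\psi(f(x))$. *)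

theory Defs
  imports "HOL-Analysis.Analysis" "HOL-Library.Liminf_Limsup"
begin

definition locally_convex_tvs :: "'b::{real_vector,t2_space} itself \<Rightarrow> bool" where
  "locally_convex_tvs _ \<longleftrightarrow>
     continuous_on UNIV (\<lambda>(x::'b, y). x + y) \<and>
     continuous_on UNIV (\<lambda>(c::real, x::'b). c *\<^sub>R x) \<and>
     (\<forall>U::'b set. open U \<and> 0 \<in> U \<longrightarrow> (\<exists>V. open V \<and> convex V \<and> 0 \<in> V \<and> V \<subseteq> U))"

definition quasi_convex :: "('b::real_vector \<Rightarrow> real) \<Rightarrow> bool" where
  "quasi_convex \<psi> \<longleftrightarrow> (\<forall>r. convex (\<psi> -` {..r}))"

definition convex_hull_like_property ::
  "('a::topological_space \<Rightarrow> 'b::{real_vector,t2_space}) \<Rightarrow> 'a set \<Rightarrow> bool" where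
  "convex_hull_like_property f \<Omega> \<longleftrightarrow>
     (\<forall>\<psi>::'b \<Rightarrow> real. continuous_on UNIV \<psi> \<and> quasi_convex \<psi> \<longrightarrow>
        (\<exists>x\<in>frontier \<Omega>.
           Limsup (at x within \<Omega>) (\<lambda>y. ereal (\<psi> (f y))) = (SUP y\<in>\<Omega>. ereal (\<psi> (f y)))))"

definition convex_hull_property ::
  "('a::topological_space \<Rightarrow> 'b::{real_vector,t2_space}) \<Rightarrow> 'a set \<Rightarrow> bool" where
  "convex_hull_property g \<Omega> \<longleftrightarrow> g ` \<Omega> \<subseteq> closure (convex hull (g ` frontier \<Omega>))"

end

theory Submission
  imports Defs
begin


lemma lc_cont_add:
  assumes "locally_convex_tvs TYPE('b::{real_vector,t2_space})"
  shows "continuous_on UNIV (\<lambda>z::'b. z + a)"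
proof -
  have "continuous_on UNIV ((\<lambda>(x::'b, y). x + y) \<circ> (\<lambda>z. (z, a)))"
    apply (rule continuous_on_compose)
     apply (intro continuous_intros)
    using assms unfolding locally_convex_tvs_def by (auto intro: continuous_on_subset)
  then show ?thesis by (simp add: o_def)
qed

lemma lc_cont_smul:
  assumes "locally_convex_tvs TYPE('b::{real_vector,t2_space})"
  shows "continuous_on UNIV (\<lambda>z::'b. c *\<^sub>R z)"
proof -
  have "continuous_on UNIV ((\<lambda>(c::real, x::'b). c *\<^sub>R x) \<circ> (\<lambda>z. (c, z)))"
    apply (rule continuous_on_compose)
     apply (intro continuous_intros)
    using assms unfolding locally_convex_tvs_def by (auto intro: continuous_on_subset)
  then show ?thesis by (simp add: o_def)
qed

lemma lc_cont_smul2: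
  assumes "locally_convex_tvs TYPE('b::{real_vector,t2_space})"
  shows "continuous_on UNIV (\<lambda>s::real. s *\<^sub>R (z::'b))"
proof -
  have "continuous_on UNIV ((\<lambda>(c::real, x::'b). c *\<^sub>R x) \<circ> (\<lambda>s. (s, z)))"
    apply (rule continuous_on_compose)
     apply (intro continuous_intros)
    using assms unfolding locally_convex_tvs_def by (auto intro: continuous_on_subset)
  then show ?thesis by (simp add: o_def)
qed

lemma open_pre:
  assumes "continuous_on UNIV f" "open B" shows "open (f -` B)"
  using continuous_on_open_vimage[of UNIV f] assms by auto

lemma absorbing:
  assumes lc: "locally_convex_tvs TYPE('b::{real_vector,t2_space})"
    and "open V" "0 \<in> V"
  shows "\<exists>t>0. \<exists>v\<in>V. (z::'b) = t *\<^sub>R v"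
proof -
  have "open ((\<lambda>s::real. s *\<^sub>R z) -` V)"
    by (rule open_pre[OF lc_cont_smul2[OF lc] assms(2)])
  moreover have "(0::real) \<in> (\<lambda>s::real. s *\<^sub>R z) -` V" using assms by simp
  ultimately obtain d where d: "d > 0" "ball 0 d \<subseteq> (\<lambda>s::real. s *\<^sub>R z) -` V"
    by (meson open_contains_ball)
  have "d/2 \<in> ball (0::real) d" using d by simp
  then have "(d/2) *\<^sub>R z \<in> V" using d(2) by blast
  moreover have "z = (2/d) *\<^sub>R ((d/2) *\<^sub>R z)" using d by simp
  ultimately show ?thesis using d by (intro exI[of _ "2/d"] conjI bexI[of _ "(d/2) *\<^sub>R z"]) auto
qed



lemma sep_fun:
  fixes C :: "'b::{real_vector,t2_space} set"
  assumes lc: "locally_convex_tvs TYPE('b)" and cC: "convex C" and ne: "C \<noteq> {}"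
    and pC: "p \<notin> closure C"
  shows "\<exists>\<psi>. continuous_on UNIV \<psi> \<and> quasi_convex \<psi> \<and> (\<forall>c\<in>C. \<psi> c < \<psi> p)"
proof -
  define U where "U = - closure C"
  have oU: "open U" and pU: "p \<in> U" and CU: "C \<inter> U = {}"
    using pC closure_subset[of C] by (auto simp: U_def)
  define W where "W = (\<lambda>z. z + p) -` U"
  have "open W" unfolding W_def by (rule open_pre[OF lc_cont_add[OF lc] oU])
  moreover have "0 \<in> W" using pU by (simp add: W_def)
  ultimately obtain V0 where V0: "open V0" "convex V0" "0 \<in> V0" "V0 \<subseteq> W"
    using lc unfolding locally_convex_tvs_def by blast
  define V where "V = V0 \<inter> (\<lambda>z. (-1::real) *\<^sub>R z) -` V0"
  have oV: "open V" unfolding V_def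
    by (intro open_Int V0 open_pre[OF lc_cont_smul[OF lc]])
  have V0V: "0 \<in> V" using V0 by (simp add: V_def)
  have symV: "- z \<in> V" if "z \<in> V" for z using that by (simp add: V_def)
  have cV: "convex V"
  proof -
    have "convex ((\<lambda>z. (-1::real) *\<^sub>R z) -` V0)"
      unfolding convex_def
    proof (intro ballI allI impI)
      fix x y :: 'b and u v :: real
      assume "x \<in> (\<lambda>z. (-1::real) *\<^sub>R z) -` V0" "y \<in> (\<lambda>z. (-1::real) *\<^sub>R z) -` V0"
        "0 \<le> u" "0 \<le> v" "u + v = 1"
      then have a: "-x \<in> V0" "-y \<in> V0" "0 \<le> u" "0 \<le> v" "u + v = 1" by simp_all
      have "u *\<^sub>R (-x) + v *\<^sub>R (-y) \<in> V0" using V0(2) a unfolding convex_def by blast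
      then show "u *\<^sub>R x + v *\<^sub>R y \<in> (\<lambda>z. (-1::real) *\<^sub>R z) -` V0" by simp
    qed
    then show ?thesis unfolding V_def using V0(2) by (rule convex_Int[rotated])
  qed
  have VU: "p + z \<in> U" if "z \<in> V" for z using that V0(4) by (auto simp: V_def W_def add.commute)
  have mono: "\<exists>v'\<in>V. t *\<^sub>R v = t' *\<^sub>R v'" if "0 < t" "t \<le> t'" "v \<in> V" for t t' v
  proof -
    have "(t/t') *\<^sub>R v + (1 - t/t') *\<^sub>R 0 \<in> V"
    proof -
      have "0 \<le> t/t'" "0 \<le> 1 - t/t'" using that by auto
      then show ?thesis using cV that(3) V0V unfolding convex_def by (metis add_diff_cancel_left' add_diff_eq)
    qed
    moreover have "t *\<^sub>R v = t' *\<^sub>R ((t/t') *\<^sub>R v + (1 - t/t') *\<^sub>R 0)" using that by simp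
    ultimately show ?thesis by blast
  qed
  have addV: "\<exists>u\<in>V. t *\<^sub>R v + s *\<^sub>R w = (t+s) *\<^sub>R u" if "0 < t" "0 < s" "v \<in> V" "w \<in> V" for t s v w
  proof -
    have "(t/(t+s)) *\<^sub>R v + (s/(t+s)) *\<^sub>R w \<in> V"
      using cV that unfolding convex_def by (simp add: add_divide_distrib[symmetric])
    moreover have "t *\<^sub>R v + s *\<^sub>R w = (t+s) *\<^sub>R ((t/(t+s)) *\<^sub>R v + (s/(t+s)) *\<^sub>R w)"
      using that by (simp add: scaleR_add_right)
    ultimately show ?thesis by blast
  qed
  define T where "T y = {t. t > 0 \<and> (\<exists>c\<in>C. \<exists>v\<in>V. y = c + t *\<^sub>R v)}" for y
  define \<psi> where "\<psi> y = Inf (T y)" for y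
  have Tne: "T y \<noteq> {}" for y
  proof -
    obtain c where "c \<in> C" using ne by blast
    moreover obtain t v where "t > 0" "v \<in> V" "y - c = t *\<^sub>R v"
      using absorbing[OF lc oV V0V] by blast
    ultimately have h: "c \<in> C" "t > 0" "v \<in> V" "y = c + t *\<^sub>R v" by (simp_all add: algebra_simps)
    then have "t \<in> T y" unfolding T_def by blast
    then show ?thesis by blast
  qed
  have Tbdd: "bdd_below (T y)" for y unfolding T_def by (rule bdd_belowI[of _ 0]) auto
  have Tup: "t' \<in> T y" if tT: "t \<in> T y" and tt: "t \<le> t'" for t t' y
  proof -
    from tT obtain c v where cv: "t > 0" "c \<in> C" "v \<in> V" "y = c + t *\<^sub>R v" unfolding T_def by blast
    then obtain v' where "v' \<in> V" "t *\<^sub>R v = t' *\<^sub>R v'" using mono tt by blast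
    then have "y = c + t' *\<^sub>R v'" "t' > 0" using cv tt by simp_all
    then show ?thesis using cv \<open>v' \<in> V\<close> unfolding T_def by blast
  qed
  have shift: "\<psi> (y + s *\<^sub>R w) \<le> \<psi> y + s" if sw: "s > 0" "w \<in> V" for y s w
  proof -
    have "\<psi> (y + s *\<^sub>R w) - s \<le> \<psi> y" unfolding \<psi>_def
    proof (rule cInf_greatest[OF Tne])
      fix t assume "t \<in> T y"
      then obtain c v where cv: "t > 0" "c \<in> C" "v \<in> V" "y = c + t *\<^sub>R v" unfolding T_def by blast
      obtain u where u: "u \<in> V" "t *\<^sub>R v + s *\<^sub>R w = (t+s) *\<^sub>R u" using addV[OF cv(1) sw(1) cv(3) sw(2)] by blast
      have "y + s *\<^sub>R w = c + (t + s) *\<^sub>R u" using cv(4) u(2) by (metis add.assoc)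
      moreover have "t + s > 0" using cv(1) sw(1) by linarith
      ultimately
      have "t + s \<in> T (y + s *\<^sub>R w)" using cv u unfolding T_def by blast
      then have "Inf (T (y + s *\<^sub>R w)) \<le> t + s" by (rule cInf_lower[OF _ Tbdd])
      then show "Inf (T (y + s *\<^sub>R w)) - s \<le> t" by simp
    qed
    then show ?thesis by simp
  qed
  have psiC: "\<psi> c = 0" if "c \<in> C" for c
  proof -
    have ge: "\<psi> c \<ge> 0" unfolding \<psi>_def by (rule cInf_greatest[OF Tne]) (auto simp: T_def)
    have le: "\<psi> c \<le> t" if "t > 0" for t
    proof -
      have "c = c + t *\<^sub>R 0" by simp
      then have "t \<in> T c" using that \<open>c \<in> C\<close> V0V unfolding T_def by blast
      then show ?thesis unfolding \<psi>_def by (rule cInf_lower[OF _ Tbdd])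
    qed
    show ?thesis
    proof (rule ccontr)
      assume "\<psi> c \<noteq> 0"
      then have "\<psi> c > 0" using ge by simp
      then show False using le[of "\<psi> c / 2"] by simp
    qed
  qed
  have psip: "\<psi> p \<ge> 1" unfolding \<psi>_def
  proof (rule cInf_greatest[OF Tne])
    fix t assume "t \<in> T p"
    then obtain c v where cv: "t > 0" "c \<in> C" "v \<in> V" "p = c + t *\<^sub>R v" unfolding T_def by blast
    show "1 \<le> t"
    proof (rule ccontr)
      assume "\<not> 1 \<le> t"
      then obtain v' where "v' \<in> V" "t *\<^sub>R v = 1 *\<^sub>R v'" using mono[of t 1 v] cv \<open>\<not> 1 \<le> t\<close> by force
      then have "c = p + (- v')" using cv by (simp add: algebra_simps)
      then have "c \<in> U" using VU symV \<open>v' \<in> V\<close> by metis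
      then show False using CU cv by blast
    qed
  qed
  have qc: "quasi_convex \<psi>" unfolding quasi_convex_def
  proof
    fix r
    show "convex (\<psi> -` {..r})" unfolding convex_def
    proof (intro allI impI ballI)
      fix x y :: 'b and u v :: real
      assume xy: "x \<in> \<psi> -` {..r}" "y \<in> \<psi> -` {..r}" and uv: "0 \<le> u" "0 \<le> v" "u + v = 1"
      have le: "\<psi> (u *\<^sub>R x + v *\<^sub>R y) \<le> t" if "t > r" for t
      proof -
        have "Inf (T x) < t" "Inf (T y) < t" using xy that by (auto simp: \<psi>_def)
        then obtain t1 t2 where "t1 \<in> T x" "t1 < t" "t2 \<in> T y" "t2 < t"
          using cInf_less_iff[OF Tne Tbdd] by meson
        then have "t \<in> T x" "t \<in> T y" using Tup[of t1 x t] Tup[of t2 y t] by simp_all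
        then obtain c1 v1 c2 v2 where h: "t > 0" "c1 \<in> C" "v1 \<in> V" "x = c1 + t *\<^sub>R v1"
          "c2 \<in> C" "v2 \<in> V" "y = c2 + t *\<^sub>R v2" unfolding T_def by blast
        have "u *\<^sub>R c1 + v *\<^sub>R c2 \<in> C" using cC h uv unfolding convex_def by blast
        moreover have "u *\<^sub>R v1 + v *\<^sub>R v2 \<in> V" using cV h uv unfolding convex_def by blast
        moreover have "u *\<^sub>R x + v *\<^sub>R y = (u *\<^sub>R c1 + v *\<^sub>R c2) + t *\<^sub>R (u *\<^sub>R v1 + v *\<^sub>R v2)"
          using h by (simp add: algebra_simps)
        ultimately have "t \<in> T (u *\<^sub>R x + v *\<^sub>R y)" using h unfolding T_def by blast
        then show ?thesis unfolding \<psi>_def by (rule cInf_lower[OF _ Tbdd])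
      qed
      show "u *\<^sub>R x + v *\<^sub>R y \<in> \<psi> -` {..r}"
      proof (rule ccontr)
        assume "u *\<^sub>R x + v *\<^sub>R y \<notin> \<psi> -` {..r}"
        then have "\<psi> (u *\<^sub>R x + v *\<^sub>R y) > r" by simp
        then show False using le[of "(\<psi> (u *\<^sub>R x + v *\<^sub>R y) + r) / 2"] by simp
      qed
    qed
  qed
  have cont: "continuous_on UNIV \<psi>"
  proof (subst continuous_on_eq_continuous_at[OF open_UNIV], intro ballI)
    fix y :: 'b
    show "isCont \<psi> y" unfolding isCont_def tendsto_iff
    proof (intro allI impI)
      fix e :: real assume e: "e > 0"
      define S where "S = (\<lambda>z. z + (- y)) -` ((\<lambda>z. (2/e) *\<^sub>R z) -` V)"
      have "open S" unfolding S_def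
        by (intro open_pre[OF lc_cont_add[OF lc]] open_pre[OF lc_cont_smul[OF lc]] oV)
      moreover have "y \<in> S" using e V0V unfolding S_def by simp
      moreover have "dist (\<psi> y') (\<psi> y) < e" if "y' \<in> S" for y'
      proof -
        define w where "w = (2/e) *\<^sub>R (y' - y)"
        have w: "w \<in> V" using that unfolding S_def w_def by simp
        have y': "y' = y + (e/2) *\<^sub>R w" using e unfolding w_def by simp
        have y: "y = y' + (e/2) *\<^sub>R (- w)" using y' by simp
        have "\<psi> y' \<le> \<psi> y + e/2" using shift[of "e/2" w y] e w y' by simp
        moreover have "\<psi> y \<le> \<psi> y' + e/2" using shift[of "e/2" "-w" y'] e symV[OF w] y by simp
        ultimately show ?thesis using e by (simp add: dist_real_def abs_le_iff)
      qed
      ultimately show "\<forall>\<^sub>F x in at y. dist (\<psi> x) (\<psi> y) < e"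
        unfolding eventually_at_topological by blast
    qed
  qed
  show ?thesis using cont qc psiC psip by (intro exI[of _ \<psi>]) auto
qed



lemma limsup_front:
  fixes \<Omega> :: "'a::topological_space set" and g :: "'a \<Rightarrow> 'b::{real_vector,t2_space}"
  assumes "open \<Omega>" "continuous_on (closure \<Omega>) g" "continuous_on UNIV \<psi>" "x \<in> frontier \<Omega>"
  shows "Limsup (at x within \<Omega>) (\<lambda>y. ereal (\<psi> (restrict g \<Omega> y))) = ereal (\<psi> (g x))"
proof -
  have xc: "x \<in> closure \<Omega>" and xn: "x \<notin> \<Omega>"
    using assms(1,4) by (auto simp: frontier_def interior_open)
  have "x islimpt \<Omega>" using xc xn by (auto simp: closure_def)
  then have nt: "\<not> trivial_limit (at x within \<Omega>)" by (simp add: trivial_limit_within)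
  have "(g \<longlongrightarrow> g x) (at x within closure \<Omega>)" using assms(2) xc by (simp add: continuous_on_def)
  then have "(g \<longlongrightarrow> g x) (at x within \<Omega>)" by (rule tendsto_within_subset) (rule closure_subset)
  moreover have "isCont \<psi> (g x)" using assms(3) by (simp add: continuous_on_eq_continuous_at)
  ultimately have "((\<lambda>y. \<psi> (g y)) \<longlongrightarrow> \<psi> (g x)) (at x within \<Omega>)"
    by (rule isCont_tendsto_compose[rotated])
  then have lim: "((\<lambda>y. ereal (\<psi> (g y))) \<longlongrightarrow> ereal (\<psi> (g x))) (at x within \<Omega>)"
    by (rule tendsto_ereal)
  have "eventually (\<lambda>y. y \<in> \<Omega>) (at x within \<Omega>)" by (simp add: eventually_at_filter)
  then have "eventually (\<lambda>y. ereal (\<psi> (restrict g \<Omega> y)) = ereal (\<psi> (g y))) (at x within \<Omega>)"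
    by (rule eventually_mono) simp
  then have "Limsup (at x within \<Omega>) (\<lambda>y. ereal (\<psi> (restrict g \<Omega> y))) =
      Limsup (at x within \<Omega>) (\<lambda>y. ereal (\<psi> (g y)))" by (rule Limsup_eq)
  also have "\<dots> = ereal (\<psi> (g x))" by (rule lim_imp_Limsup[OF nt lim])
  finally show ?thesis .
qed

theorem proposition3:
  fixes \<Omega> :: "'a::topological_space set" and g :: "'a \<Rightarrow> 'b::{real_vector,t2_space}"
  assumes "locally_convex_tvs TYPE('b)"
    and "\<Omega> \<noteq> {}" and "open \<Omega>" and "compact (closure \<Omega>)" and "frontier \<Omega> \<noteq> {}"
    and "continuous_on (closure \<Omega>) g"
  shows "convex_hull_like_property (restrict g \<Omega>) \<Omega> \<longleftrightarrow> convex_hull_property g \<Omega>"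
proof
  assume H: "convex_hull_like_property (restrict g \<Omega>) \<Omega>"
  show "convex_hull_property g \<Omega>" unfolding convex_hull_property_def
  proof (rule subsetI, rule ccontr)
    fix p assume "p \<in> g ` \<Omega>" and pn: "p \<notin> closure (convex hull g ` frontier \<Omega>)"
    then obtain x0 where x0: "x0 \<in> \<Omega>" "p = g x0" by blast
    have "convex hull g ` frontier \<Omega> \<noteq> {}" using assms(5) by simp
    then obtain \<psi> where psi: "continuous_on UNIV \<psi>" "quasi_convex \<psi>"
      "\<forall>c\<in>convex hull g ` frontier \<Omega>. \<psi> c < \<psi> p"
      using sep_fun[OF assms(1) convex_convex_hull _ pn] by blast
    obtain x where x: "x \<in> frontier \<Omega>"
      "Limsup (at x within \<Omega>) (\<lambda>y. ereal (\<psi> (restrict g \<Omega> y))) = (SUP y\<in>\<Omega>. ereal (\<psi> (restrict g \<Omega> y)))"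
      using H psi unfolding convex_hull_like_property_def by blast
    have "ereal (\<psi> (g x)) = (SUP y\<in>\<Omega>. ereal (\<psi> (restrict g \<Omega> y)))"
      using x limsup_front[OF assms(3,6) psi(1) x(1)] by simp
    also have "\<dots> \<ge> ereal (\<psi> (restrict g \<Omega> x0))" using x0 by (intro SUP_upper)
    finally have "\<psi> (g x) \<ge> \<psi> p" using x0 by simp
    moreover have "g x \<in> convex hull g ` frontier \<Omega>" using x(1) by (simp add: hull_inc)
    ultimately show False using psi(3) by fastforce
  qed
next
  assume H: "convex_hull_property g \<Omega>"
  show "convex_hull_like_property (restrict g \<Omega>) \<Omega>" unfolding convex_hull_like_property_def
  proof (intro allI impI)
    fix \<psi> :: "'b \<Rightarrow> real" assume psi: "continuous_on UNIV \<psi> \<and> quasi_convex \<psi>"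
    have fc: "frontier \<Omega> \<subseteq> closure \<Omega>" by (simp add: frontier_def)
    have "compact (closure \<Omega> \<inter> frontier \<Omega>)" using assms(4) by blast
    then have cf: "compact (frontier \<Omega>)" using fc by (simp add: Int_absorb1)
    have "continuous_on (frontier \<Omega>) (\<lambda>y. \<psi> (g y))"
      using continuous_on_compose[OF continuous_on_subset[OF assms(6) fc] continuous_on_subset[of UNIV \<psi>]] psi
      by (simp add: o_def)
    then obtain x where x: "x \<in> frontier \<Omega>" "\<forall>y\<in>frontier \<Omega>. \<psi> (g y) \<le> \<psi> (g x)"
      using continuous_attains_sup[OF cf assms(5)] by blast
    define L where "L = \<psi> -` {..\<psi> (g x)}"
    have cL: "convex L" using psi unfolding L_def quasi_convex_def by blast
    have clL: "closed L" unfolding L_def using psi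
      by (intro continuous_closed_vimage) (auto simp: continuous_on_eq_continuous_at)
    have "g ` frontier \<Omega> \<subseteq> L" using x unfolding L_def by auto
    then have "convex hull g ` frontier \<Omega> \<subseteq> L" using cL by (rule hull_minimal)
    then have "closure (convex hull g ` frontier \<Omega>) \<subseteq> L" using clL by (rule closure_minimal)
    then have le: "\<psi> (g y) \<le> \<psi> (g x)" if "y \<in> \<Omega>" for y
      using H that unfolding convex_hull_property_def L_def by blast
    have lim: "Limsup (at x within \<Omega>) (\<lambda>y. ereal (\<psi> (restrict g \<Omega> y))) = ereal (\<psi> (g x))"
      using limsup_front[OF assms(3,6) _ x(1)] psi by blast
    have "(SUP y\<in>\<Omega>. ereal (\<psi> (restrict g \<Omega> y))) \<le> ereal (\<psi> (g x))"
      using le by (intro SUP_least) simp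
    moreover have "Limsup (at x within \<Omega>) (\<lambda>y. ereal (\<psi> (restrict g \<Omega> y))) \<le> (SUP y\<in>\<Omega>. ereal (\<psi> (restrict g \<Omega> y)))"
    proof (rule Limsup_bounded)
      show "\<forall>\<^sub>F y in at x within \<Omega>. ereal (\<psi> (restrict g \<Omega> y)) \<le> (SUP y\<in>\<Omega>. ereal (\<psi> (restrict g \<Omega> y)))"
      proof (rule eventually_mono)
        show "eventually (\<lambda>y. y \<in> \<Omega>) (at x within \<Omega>)" by (simp add: eventually_at_filter)
      next
        fix y assume "y \<in> \<Omega>"
        then show "ereal (\<psi> (restrict g \<Omega> y)) \<le> (SUP y\<in>\<Omega>. ereal (\<psi> (restrict g \<Omega> y)))"
          by (rule SUP_upper)
      qed
    qed
    ultimately show "\<exists>x\<in>frontier \<Omega>. Limsup (at x within \<Omega>) (\<lambda>y. ereal (\<psi> (restrict g \<Omega> y))) = (SUP y\<in>\<Omega>. ereal (\<psi> (restrict g \<Omega> y)))"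
      using x(1) lim by (intro bexI[of _ x]) auto
  qed
qed

end
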